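(* Let $\mu>1$ and $\beta>0$. If $\tilde f\in\tilde{\mathcal C}_{1,\beta}(V)$ is such that $\tilde M=\tilde\delta\tilde f$ satisfies $\mathcal N[\tilde M;\tilde{\mathcal C}^\mu_{2,\beta}]<\infty$, then $\tilde M=0$. In other words, $\mathcal Z\tilde{\mathcal C}^\mu_{2,\beta}=\{0\}$.
   Context: Fix a measurable $\hat\phi:(0,\infty)\to\mathbb R$, a separable Banach space $V$ and an interval $[\ell_1,\ell_2]$. $\mathcal L_\beta(V)$ is the space of measurable $g:[0,\infty)\to V$ with $\mathcal N[g;\mathcal L_\beta]=\int_0^\infty|\hat\phi(\xi)|(1+\xi^\beta)\|g(\xi)\|_Vd\xi<\infty$. $\tilde{\mathcal C}_{1,\beta}(V)$ is the space of continuous maps $[\ell_1,\ell_2]\to\mathcal L_\beta(V)$, $\tilde{\mathcal C}_{2,\beta}(V)$ the space of continuous maps from $\{(t,s):\ell_2\ge t\ge s\ge\ell_1\}$ to $\mathcal L_\beta(V)$. $(\tilde\delta\tilde f)_{ts}(\xi)=\tilde f_t(\xi)-e^{-\xi(t-s)}\tilde f_s(\xi)$. $\mathcal N[\tilde M;\tilde{\mathcal C}^\mu_{2,\beta}]=\sup_{s<t}\mathcal N[\tilde M_{ts};\mathcal L_\beta]/|t-s|^\mu$, and $\mathcal Z\tilde{\mathcal C}^\mu_{2,\beta}$ is the set of elements of $\tilde{\mathcal C}_{2,\beta}$ of finite such norm lying in the image of $\tilde\delta$. *)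

theory Defs
  imports "HOL-Analysis.Analysis"
begin

definition Nbeta :: "(real \<Rightarrow> real) \<Rightarrow> real \<Rightarrow> (real \<Rightarrow> 'v::real_normed_vector) \<Rightarrow> ennreal" where
  "Nbeta phi beta g =
     (\<integral>\<^sup>+ \<xi>\<in>{0..}. ennreal (\<bar>phi \<xi>\<bar> * (1 + \<xi> powr beta) * norm (g \<xi>)) \<partial>lborel)"

definition Lbeta :: "(real \<Rightarrow> real) \<Rightarrow> real \<Rightarrow> (real \<Rightarrow> 'v::{banach,second_countable_topology}) set" where
  "Lbeta phi beta = {g. g \<in> borel_measurable (restrict_space lborel {0..}) \<and> Nbeta phi beta g < \<infinity>}"

definition C1beta :: "(real \<Rightarrow> real) \<Rightarrow> real \<Rightarrow> real \<Rightarrow> real \<Rightarrow>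
    (real \<Rightarrow> real \<Rightarrow> 'v::{banach,second_countable_topology}) set" where
  "C1beta phi beta l1 l2 =
     {f. (\<forall>t\<in>{l1..l2}. f t \<in> Lbeta phi beta) \<and>
         (\<forall>t\<in>{l1..l2}. \<forall>\<epsilon>>0. \<exists>d>0. \<forall>s\<in>{l1..l2}. \<bar>s - t\<bar> < d \<longrightarrow>
             Nbeta phi beta (\<lambda>\<xi>. f s \<xi> - f t \<xi>) < ennreal \<epsilon>)}"

definition tdelta :: "(real \<Rightarrow> real \<Rightarrow> 'v::real_normed_vector) \<Rightarrow> real \<Rightarrow> real \<Rightarrow> real \<Rightarrow> 'v" where
  "tdelta f t s = (\<lambda>\<xi>. f t \<xi> - exp (- \<xi> * (t - s)) *\<^sub>R f s \<xi>)"

definition NC2mu :: "(real \<Rightarrow> real) \<Rightarrow> real \<Rightarrow> real \<Rightarrow> real \<Rightarrow> real \<Rightarrow>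
    (real \<Rightarrow> real \<Rightarrow> real \<Rightarrow> 'v::real_normed_vector) \<Rightarrow> ennreal" where
  "NC2mu phi beta mu l1 l2 M =
     (SUP p\<in>{(t, s). l1 \<le> s \<and> s < t \<and> t \<le> l2}.
        Nbeta phi beta (M (fst p) (snd p)) / ennreal (\<bar>fst p - snd p\<bar> powr mu))"

end

theory Submission
  imports Defs
begin

lemma tdelta_chen:
  fixes f :: "real \<Rightarrow> real \<Rightarrow> 'v::real_normed_vector"
  assumes "\<xi> \<ge> 0" "u \<le> s" "s \<le> t"
  shows "norm (tdelta f t u \<xi>) \<le> norm (tdelta f t s \<xi>) + norm (tdelta f s u \<xi>)"
proof -
  have e: "exp (- \<xi> * (t - s)) * exp (- \<xi> * (s - u)) = exp (- \<xi> * (t - u))"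
    by (simp add: exp_add[symmetric] algebra_simps)
  have eq: "tdelta f t u \<xi> = tdelta f t s \<xi> + exp (- \<xi> * (t - s)) *\<^sub>R tdelta f s u \<xi>"
  proof -
    have e': "exp (\<xi> * s - \<xi> * t) * exp (\<xi> * u - \<xi> * s) = exp (\<xi> * u - \<xi> * t)"
      by (simp add: exp_add[symmetric])
    show ?thesis unfolding tdelta_def by (simp add: algebra_simps e')
  qed
  have le1: "exp (- \<xi> * (t - s)) \<le> 1" using assms by (simp add: mult_nonneg_nonneg)
  have "norm (exp (- \<xi> * (t - s)) *\<^sub>R tdelta f s u \<xi>) \<le> norm (tdelta f s u \<xi>)"
    using le1 by (simp add: mult_left_le_one_le)
  then show ?thesis unfolding eq by (meson norm_triangle_le order.refl add_mono)
qed

lemma tdelta_chain: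
  fixes f :: "real \<Rightarrow> real \<Rightarrow> 'v::real_normed_vector"
  assumes "\<xi> \<ge> 0" "\<And>k. a k \<le> a (Suc k)"
  shows "norm (tdelta f (a n) (a 0) \<xi>) \<le> (\<Sum>k<n. norm (tdelta f (a (Suc k)) (a k) \<xi>))"
proof (induction n)
  case 0
  then show ?case by (simp add: tdelta_def)
next
  case (Suc n)
  have "a 0 \<le> a n" using assms(2) by (metis incseq_SucI incseq_def le0)
  then have "norm (tdelta f (a (Suc n)) (a 0) \<xi>) \<le> norm (tdelta f (a (Suc n)) (a n) \<xi>) + norm (tdelta f (a n) (a 0) \<xi>)"
    using tdelta_chen[OF assms(1) _ assms(2)] by blast
  then show ?case using Suc by simp
qed

theorem lemma3p4:
  fixes phi :: "real \<Rightarrow> real" and beta mu l1 l2 :: real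
    and f :: "real \<Rightarrow> real \<Rightarrow> 'v::{banach,second_countable_topology}"
  assumes "phi \<in> borel_measurable lborel"
    and "l1 \<le> l2"
    and "mu > 1" and "beta > 0"
    and "f \<in> C1beta phi beta l1 l2"
    and "NC2mu phi beta mu l1 l2 (tdelta f) < \<infinity>"
  shows "\<forall>t s. l1 \<le> s \<and> s \<le> t \<and> t \<le> l2 \<longrightarrow> Nbeta phi beta (tdelta f t s) = 0"
proof (intro allI impI)
  fix t u assume tu: "l1 \<le> u \<and> u \<le> t \<and> t \<le> l2"
  define R where "R = restrict_space lborel {0::real..}"
  define W where "W = (\<lambda>\<xi>::real. \<bar>phi \<xi>\<bar> * (1 + \<xi> powr beta))"
  have W0: "\<xi> \<ge> 0 \<Longrightarrow> W \<xi> \<ge> 0" for \<xi> unfolding W_def by (simp add: add_nonneg_nonneg)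
  have NR: "Nbeta phi beta g = (\<integral>\<^sup>+ \<xi>. ennreal (W \<xi> * norm (g \<xi>)) \<partial>R)" for g :: "real \<Rightarrow> 'v"
    unfolding Nbeta_def R_def W_def by (subst nn_integral_restrict_space) auto
  have meas: "(\<lambda>\<xi>. ennreal (W \<xi> * norm (tdelta f a b \<xi>))) \<in> borel_measurable R"
    if "a \<in> {l1..l2}" "b \<in> {l1..l2}" for a b
  proof -
    have [measurable]: "f a \<in> borel_measurable R" "f b \<in> borel_measurable R"
      using assms(5) that unfolding C1beta_def Lbeta_def R_def by auto
    have [measurable]: "phi \<in> borel_measurable R" unfolding R_def by (rule measurable_restrict_space1[OF assms(1)])
    have [measurable]: "(\<lambda>\<xi>::real. 1 + \<xi> powr beta) \<in> borel_measurable R"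
      unfolding R_def by (rule measurable_restrict_space1) measurable
    have [measurable]: "(\<lambda>\<xi>::real. exp (- \<xi> * (a - b))) \<in> borel_measurable R"
      unfolding R_def by (rule measurable_restrict_space1) measurable
    show ?thesis unfolding W_def tdelta_def by measurable
  qed
  have spR: "space R = {0..}" unfolding R_def by simp
  show "Nbeta phi beta (tdelta f t u) = 0"
  proof (cases "u = t")
    case True
    then show ?thesis unfolding Nbeta_def tdelta_def by simp
  next
    case False
    with tu have ut: "u < t" by simp
    define h where "h = t - u"
    have h0: "h > 0" using ut h_def by simp
    obtain c where C: "NC2mu phi beta mu l1 l2 (tdelta f) = ennreal c" "c \<ge> 0"
      using assms(6) by (cases "NC2mu phi beta mu l1 l2 (tdelta f)") auto
    have bound: "Nbeta phi beta (tdelta f a b) \<le> ennreal (c * (a - b) powr mu)"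
      if "l1 \<le> b" "b < a" "a \<le> l2" for a b
    proof -
      have "Nbeta phi beta (tdelta f a b) / ennreal (\<bar>a - b\<bar> powr mu) \<le> NC2mu phi beta mu l1 l2 (tdelta f)"
        unfolding NC2mu_def by (rule SUP_upper2[where i="(a, b)"]) (use that in auto)
      then have 1: "Nbeta phi beta (tdelta f a b) / ennreal ((a - b) powr mu) \<le> ennreal c"
        using C that by simp
      have "(a - b) powr mu > 0" using that by simp
      then have "Nbeta phi beta (tdelta f a b) \<le> ennreal c * ennreal ((a - b) powr mu)"
        using 1 by (metis ennreal_divide_times ennreal_times_divide mult_divide_eq_ennreal
            mult_right_mono zero_le ennreal_eq_0_iff ennreal_neq_top not_less order.refl)
      then show ?thesis using C(2) by (simp add: ennreal_mult)
    qed
    have nb: "Nbeta phi beta (tdelta f t u) \<le> ennreal (c * h powr mu * real n powr (1 - mu))"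
      if n: "n \<ge> 1" for n :: nat
    proof -
      define a where "a = (\<lambda>k::nat. u + real k * h / real n)"
      have amono: "a k \<le> a (Suc k)" for k unfolding a_def using h0 n by (simp add: divide_right_mono distrib_right)
      have a0: "a 0 = u" and an: "a n = t" unfolding a_def h_def using n by auto
      have ain: "a k \<in> {l1..l2}" if "k \<le> n" for k
      proof -
        have A: "real k * h / real n \<le> h" using that n h0 by (simp add: divide_le_eq mult_right_mono mult.commute)
        have B: "real k * h / real n \<ge> 0" using h0 by simp
        have T: "t = u + h" unfolding h_def by simp
        show ?thesis using tu A B T unfolding a_def atLeastAtMost_iff by linarith
      qed
      have step: "a (Suc k) - a k = h / real n" for k unfolding a_def by (simp add: distrib_right add_divide_distrib)
      have "Nbeta phi beta (tdelta f t u) = (\<integral>\<^sup>+ \<xi>. ennreal (W \<xi> * norm (tdelta f (a n) (a 0) \<xi>)) \<partial>R)"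
        unfolding NR a0 an ..
      also have "\<dots> \<le> (\<integral>\<^sup>+ \<xi>. (\<Sum>k<n. ennreal (W \<xi> * norm (tdelta f (a (Suc k)) (a k) \<xi>))) \<partial>R)"
      proof (rule nn_integral_mono)
        fix \<xi> assume "\<xi> \<in> space R"
        then have x0: "\<xi> \<ge> 0" using spR by auto
        have "W \<xi> * norm (tdelta f (a n) (a 0) \<xi>) \<le> W \<xi> * (\<Sum>k<n. norm (tdelta f (a (Suc k)) (a k) \<xi>))"
          by (rule mult_left_mono[OF tdelta_chain[where a=a and f=f and n=n, OF x0 amono] W0[OF x0]])
        then show "ennreal (W \<xi> * norm (tdelta f (a n) (a 0) \<xi>)) \<le> (\<Sum>k<n. ennreal (W \<xi> * norm (tdelta f (a (Suc k)) (a k) \<xi>)))"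
        proof -
          have "(\<Sum>k<n. ennreal (W \<xi> * norm (tdelta f (a (Suc k)) (a k) \<xi>)))
              = ennreal (\<Sum>k<n. W \<xi> * norm (tdelta f (a (Suc k)) (a k) \<xi>))"
            by (rule sum_ennreal) (use W0[OF x0] in simp)
          then show ?thesis using \<open>W \<xi> * _ \<le> _\<close> by (simp add: sum_distrib_left ennreal_leI)
        qed
      qed
      also have "\<dots> = (\<Sum>k<n. Nbeta phi beta (tdelta f (a (Suc k)) (a k)))"
        unfolding NR by (rule nn_integral_sum) (intro meas ain; simp)
      also have "\<dots> \<le> (\<Sum>k<n. ennreal (c * (h / real n) powr mu))"
      proof (rule sum_mono)
        fix k assume "k \<in> {..<n}"
        then have "a (Suc k) \<in> {l1..l2}" "a k \<in> {l1..l2}" using ain by auto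
        moreover have "a k < a (Suc k)"
        proof -
          have "h / real n > 0" using h0 n by simp
          then show ?thesis using step[of k] by linarith
        qed
        ultimately show "Nbeta phi beta (tdelta f (a (Suc k)) (a k)) \<le> ennreal (c * (h / real n) powr mu)"
          using bound[of "a k" "a (Suc k)"] step[of k] by auto
      qed
      also have "\<dots> = ennreal (real n * (c * (h / real n) powr mu))"
        using C(2) by (simp add: ennreal_mult ennreal_of_nat_eq_real_of_nat)
      also have "real n * (c * (h / real n) powr mu) = c * h powr mu * real n powr (1 - mu)"
        using n h0 by (simp add: powr_divide powr_diff field_simps)
      finally show ?thesis .
    qed
    obtain x where x: "Nbeta phi beta (tdelta f t u) = ennreal x" "x \<ge> 0"
    proof (cases "Nbeta phi beta (tdelta f t u)" rule: ennreal_cases)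
      case (real r) then show ?thesis using that by blast
    next
      case top then show ?thesis using nb[of 1] by (simp add: top_unique)
    qed
    have xle: "x \<le> c * h powr mu * real n powr (1 - mu)" if "n \<ge> 1" for n :: nat
    proof -
      have "c * h powr mu * real n powr (1 - mu) \<ge> 0" using C(2) by simp
      then show ?thesis using nb[OF that] x by (simp add: ennreal_le_iff)
    qed
    have lim: "(\<lambda>n::nat. c * h powr mu * real n powr (1 - mu)) \<longlonglongrightarrow> c * h powr mu * 0"
      by (intro tendsto_mult tendsto_const tendsto_neg_powr filterlim_real_sequentially) (use assms(3) in simp)
    have "x \<le> c * h powr mu * 0"
      by (rule LIMSEQ_le_const[OF lim]) (use xle in \<open>auto intro: exI[of _ 1]\<close>)
    then show ?thesis using x by simp
  qed
qed

end
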